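(* For $i,j\in\mathbb{N}$ and $m,n\in\mathbb{N}_0$: (1) if $i\le j$ then $d_i(n)\le d_j(n)$; (2) if $i\le j$ and $d_j(m)=d_i(n)$, then $d_j(m)=d_i(m)$.
   Context: For $i\in\mathbb{N}$ and $n\in\mathbb{N}_0$, $d_i(n)=2^{i-1}-\left|(n\bmod 2^i)-2^{i-1}\right|$. *)

theory Defs
  imports Main
begin

definition d :: "nat \<Rightarrow> nat \<Rightarrow> int" where
  "d i n = 2 ^ (i - 1) - \<bar>int (n mod 2 ^ i) - 2 ^ (i - 1)\<bar>"

end

theory Submission
  imports Defs
begin

lemma d_alt:
  assumes "1 \<le> i"
  shows "d i n = min (int (n mod 2^i)) (2^i - int (n mod 2^i))"
proof -
  have "(2::int)^i = 2 * 2^(i-1)" using assms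
    by (metis One_nat_def Suc_pred less_eq_Suc_le power_Suc)
  then show ?thesis unfolding d_def by auto
qed

lemma d_le:
  assumes "1 \<le> i" and "(2::int)^i dvd t"
  shows "d i n \<le> \<bar>int n - t\<bar>"
proof -
  define P :: int where "P = 2^i"
  define r where "r = int (n mod 2^i)"
  have P0: "P > 0" unfolding P_def by simp
  have r: "0 \<le> r" "r < P" unfolding r_def P_def by auto
  have nq: "int n = (int n div P) * P + r" unfolding r_def P_def
    by (simp add: zmod_int zdiv_int of_nat_mod[symmetric] ) (metis div_mult_mod_eq of_nat_add of_nat_mult of_nat_numeral of_nat_power mult.commute)
  obtain k where t: "t = k * P" using assms(2) unfolding P_def by (auto simp: mult.commute)
  define c where "c = int n div P - k"
  have e: "int n - t = c * P + r" using nq t unfolding c_def by (simp add: algebra_simps)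
  have dd: "d i n = min r (P - r)" using d_alt[OF assms(1)] unfolding r_def P_def by simp
  show ?thesis
  proof (cases "c \<ge> 0")
    case True
    then have "c * P \<ge> 0" using P0 by simp
    then show ?thesis using e dd r by linarith
  next
    case False
    then have "c \<le> -1" by simp
    then have "c * P \<le> -1 * P" using P0 by (intro mult_right_mono) auto
    then show ?thesis using e dd r by linarith
  qed
qed

lemma d_ex:
  assumes "1 \<le> i"
  shows "\<exists>t. (2::int)^i dvd t \<and> d i n = \<bar>int n - t\<bar>"
proof -
  define P :: int where "P = 2^i"
  define r where "r = int (n mod 2^i)"
  have nq: "int n = (int n div P) * P + r" unfolding r_def P_def
    by (simp add: zmod_int zdiv_int of_nat_mod[symmetric] ) (metis div_mult_mod_eq of_nat_add of_nat_mult of_nat_numeral of_nat_power mult.commute)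
  have r: "0 \<le> r" "r < P" unfolding r_def P_def by auto
  have dd: "d i n = min r (P - r)" using d_alt[OF assms(1)] unfolding r_def P_def by simp
  show ?thesis
  proof (cases "r \<le> P - r")
    case True
    show ?thesis
      by (rule exI[of _ "(int n div P) * P"]) (use nq dd True r in \<open>auto simp: P_def\<close>)
  next
    case False
    show ?thesis
      by (rule exI[of _ "(int n div P + 1) * P"]) (use nq dd False r in \<open>auto simp: P_def algebra_simps\<close>)
  qed
qed

lemma d_bound:
  assumes "1 \<le> i" shows "d i n \<le> 2^(i-1)"
  unfolding d_def by simp

theorem claim10:
  fixes i j m n :: nat
  assumes "1 \<le> i" and "i \<le> j"
  shows "d i n \<le> d j n \<and> (d j m = d i n \<longrightarrow> d j m = d i m)"
proof -
  have j1: "1 \<le> j" using assms by simp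
  have dv: "(2::int)^i dvd 2^j" using assms(2) by (simp add: le_imp_power_dvd)
  have one: "d i x \<le> d j x" for x
  proof -
    obtain t where t: "(2::int)^j dvd t" "d j x = \<bar>int x - t\<bar>" using d_ex[OF j1] by blast
    show ?thesis using d_le[OF assms(1) dvd_trans[OF dv t(1)]] t(2) by simp
  qed
  moreover have "d j m = d i m" if h: "d j m = d i n"
  proof -
    obtain t where t: "(2::int)^j dvd t" "d j m = \<bar>int m - t\<bar>" using d_ex[OF j1] by blast
    obtain s where s: "(2::int)^i dvd s" "d i m = \<bar>int m - s\<bar>" using d_ex[OF assms(1)] by blast
    have ti: "(2::int)^i dvd t" using dvd_trans[OF dv t(1)] .
    have hb: "d j m \<le> 2^(i-1)" using h d_bound[OF assms(1)] by simp
    have P: "(2::int)^i = 2 * 2^(i-1)" using assms(1)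
      by (metis One_nat_def Suc_pred less_eq_Suc_le power_Suc)
    have "d i m \<ge> d j m"
    proof (cases "s = t")
      case True then show ?thesis using s t by simp
    next
      case False
      have "(2::int)^i dvd (s - t)" using s(1) ti by simp
      then obtain c where c: "s - t = 2^i * c" by blast
      have "c \<noteq> 0" using c False by auto
      then have "\<bar>c\<bar> \<ge> 1" by simp
      then have "\<bar>s - t\<bar> \<ge> 2^i" unfolding c abs_mult by simp
      then show ?thesis using s(2) t(2) hb P by linarith
    qed
    then show ?thesis using one[of m] by simp
  qed
  ultimately show ?thesis by blast
qed

end
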